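(* Let $\mathcal P_0=\{p\in\mathbb C[z]:p(0)=0\}$. Let $\pi$ be a non-zero submultiplicative seminorm on $\mathcal P_0$ and let $\{p_k\}_{k\in\mathbb N}$ be a sequence in $\mathcal P_0$ such that $\{p_k:k\in\mathbb N\}$ is dense in $\mathcal P_0$ with respect to any seminorm on $\mathcal P_0$. Assume that there exist sequences $\{n_k\}_{k\in\mathbb N}$ and $\{m_k\}_{k\in\mathbb N}$ of positive integers and a sequence $\{c_k\}_{k\in\mathbb N}$ of complex numbers such that $\pi(c_kz^{n_k}-p_k)\to0$ and $\pi(z(1+z)^{m_k}-p_k)\to0$ as $k\to\infty$. Then $\pi$ is a norm and the completion $A$ of $(\mathcal P_0,\pi)$ is an infinite dimensional chaotic Banach algebra with $z$ as a chaotic element.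
   Context: A function $\pi$ on an algebra is submultiplicative if $\pi(ab)\le\pi(a)\pi(b)$. A Banach algebra is a complex algebra, possibly without unit, with a complete submultiplicative norm; $A^{\#}=A\oplus\mathrm{span}\{\mathbf 1\}$ is its unitalization. An element $a\in A$ is chaotic if both $\{wa^n:w\in\mathbb C,\ n\in\mathbb N\}$ and $\{(\mathbf 1+a)^na:n\in\mathbb N\}$ are dense in $A$; $A$ is chaotic if it has a chaotic element. $\mathbb N$ denotes the positive integers. *)

theory Defs
  imports "HOL-Analysis.Analysis" "HOL-Computational_Algebra.Polynomial"
begin

definition P0 :: "complex poly set" where
  "P0 = {p. poly p 0 = 0}"

(* seminorms on P_0 (values outside P_0 are irrelevant) *)
definition seminorm_on_P0 :: "(complex poly \<Rightarrow> real) \<Rightarrow> bool" where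
  "seminorm_on_P0 \<sigma> \<longleftrightarrow>
     (\<forall>p\<in>P0. 0 \<le> \<sigma> p) \<and>
     (\<forall>p\<in>P0. \<forall>q\<in>P0. \<sigma> (p + q) \<le> \<sigma> p + \<sigma> q) \<and>
     (\<forall>c. \<forall>p\<in>P0. \<sigma> (smult c p) = cmod c * \<sigma> p)"

definition submultiplicative_on_P0 :: "(complex poly \<Rightarrow> real) \<Rightarrow> bool" where
  "submultiplicative_on_P0 \<sigma> \<longleftrightarrow> (\<forall>p\<in>P0. \<forall>q\<in>P0. \<sigma> (p * q) \<le> \<sigma> p * \<sigma> q)"

definition norm_on_P0 :: "(complex poly \<Rightarrow> real) \<Rightarrow> bool" where
  "norm_on_P0 \<sigma> \<longleftrightarrow> seminorm_on_P0 \<sigma> \<and> (\<forall>p\<in>P0. \<sigma> p = 0 \<longrightarrow> p = 0)"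

(* A complex Banach algebra (possibly without unit): a real Banach algebra 'a
   (associative, submultiplicative complete norm) together with a complex scalar
   multiplication sc extending the real one, compatible with the algebra and the norm. *)
definition complex_scalar ::
  "(complex \<Rightarrow> 'a::{real_normed_algebra,banach} \<Rightarrow> 'a) \<Rightarrow> bool" where
  "complex_scalar sc \<longleftrightarrow>
     (\<forall>r x. sc (complex_of_real r) x = scaleR r x) \<and>
     (\<forall>a b x. sc (a + b) x = sc a x + sc b x) \<and>
     (\<forall>a x y. sc a (x + y) = sc a x + sc a y) \<and>
     (\<forall>a b x. sc a (sc b x) = sc (a * b) x) \<and>
     (\<forall>a x y. sc a (x * y) = sc a x * y) \<and>
     (\<forall>a x y. sc a (x * y) = x * sc a y) \<and>
     (\<forall>a x. norm (sc a x) = cmod a * norm x)"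

definition cspan :: "(complex \<Rightarrow> 'a::{real_normed_algebra,banach} \<Rightarrow> 'a) \<Rightarrow> 'a set \<Rightarrow> 'a set" where
  "cspan sc S = {(\<Sum>x\<in>F. sc (u x) x) | F u. finite F \<and> F \<subseteq> S}"

definition infinite_dimensional ::
  "(complex \<Rightarrow> 'a::{real_normed_algebra,banach} \<Rightarrow> 'a) \<Rightarrow> bool" where
  "infinite_dimensional sc \<longleftrightarrow> \<not> (\<exists>S. finite S \<and> cspan sc S = UNIV)"

(* ppow a n = a^(n+1) in a possibly non-unital algebra *)
definition ppow :: "'a::real_normed_algebra \<Rightarrow> nat \<Rightarrow> 'a" where
  "ppow a n = (((*) a) ^^ n) a"

(* uorb a n = (1 + a)^n a, computed in the unitalization A^# and lying in A:
   (1+a)^0 a = a,  (1+a)^(n+1) a = (1+a)^n a + a (1+a)^n a *)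
definition uorb :: "'a::real_normed_algebra \<Rightarrow> nat \<Rightarrow> 'a" where
  "uorb a n = ((\<lambda>x. x + a * x) ^^ n) a"

definition chaotic_element ::
  "(complex \<Rightarrow> 'a::{real_normed_algebra,banach} \<Rightarrow> 'a) \<Rightarrow> 'a \<Rightarrow> bool" where
  "chaotic_element sc a \<longleftrightarrow>
     closure {sc w (ppow a n) | w n. True} = UNIV \<and>
     closure {uorb a n | n. n \<ge> 1} = UNIV"

definition chaotic_algebra ::
  "(complex \<Rightarrow> 'a::{real_normed_algebra,banach} \<Rightarrow> 'a) \<Rightarrow> bool" where
  "chaotic_algebra sc \<longleftrightarrow> (\<exists>a. chaotic_element sc a)"

(* j : (P_0, \<pi>) \<rightarrow> A is an isometric complex-algebra homomorphism with dense range,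
   i.e. A (with sc) is a completion of (P_0, \<pi>) *)
definition is_completion ::
  "(complex poly \<Rightarrow> real) \<Rightarrow> (complex \<Rightarrow> 'a::{real_normed_algebra,banach} \<Rightarrow> 'a)
     \<Rightarrow> (complex poly \<Rightarrow> 'a) \<Rightarrow> bool" where
  "is_completion \<pi> sc j \<longleftrightarrow>
     complex_scalar sc \<and>
     (\<forall>p\<in>P0. \<forall>q\<in>P0. j (p + q) = j p + j q) \<and>
     (\<forall>p\<in>P0. \<forall>q\<in>P0. j (p * q) = j p * j q) \<and>
     (\<forall>c. \<forall>p\<in>P0. j (smult c p) = sc c (j p)) \<and>
     (\<forall>p\<in>P0. norm (j p) = \<pi> p) \<and>
     closure (j ` P0) = UNIV"

end

theory Submission
  imports Defs "HOL-Computational_Algebra.Fundamental_Theorem_Algebra"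
begin


lemma P0_iff: "p \<in> P0 \<longleftrightarrow> poly p 0 = 0" by (simp add: P0_def)
lemma P0_add[simp]: "p \<in> P0 \<Longrightarrow> q \<in> P0 \<Longrightarrow> p + q \<in> P0" by (simp add: P0_def)
lemma P0_diff[simp]: "p \<in> P0 \<Longrightarrow> q \<in> P0 \<Longrightarrow> p - q \<in> P0" by (simp add: P0_def)
lemma P0_uminus[simp]: "p \<in> P0 \<Longrightarrow> - p \<in> P0" by (simp add: P0_def)
lemma P0_multl[simp]: "q \<in> P0 \<Longrightarrow> g * q \<in> P0" by (simp add: P0_def)
lemma P0_multr[simp]: "q \<in> P0 \<Longrightarrow> q * g \<in> P0" by (simp add: P0_def)
lemma P0_smult[simp]: "p \<in> P0 \<Longrightarrow> smult a p \<in> P0" by (simp add: P0_def)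
lemma P0_0[simp]: "0 \<in> P0" by (simp add: P0_def)
lemma P0_Z[simp]: "[:0,1:] \<in> P0" by (simp add: P0_def)
lemma P0_monom[simp]: "N \<ge> 1 \<Longrightarrow> monom a N \<in> P0" by (simp add: P0_def poly_monom)
lemma P0_Zpow[simp]: "N \<ge> 1 \<Longrightarrow> [:0,1:] ^ N \<in> P0" by (simp add: P0_def)

context
  fixes \<sigma> :: "complex poly \<Rightarrow> real"
  assumes sn: "seminorm_on_P0 \<sigma>"
begin
lemma sn_nonneg: "f \<in> P0 \<Longrightarrow> 0 \<le> \<sigma> f" using sn by (simp add: seminorm_on_P0_def)
lemma sn_add: "f \<in> P0 \<Longrightarrow> g \<in> P0 \<Longrightarrow> \<sigma> (f + g) \<le> \<sigma> f + \<sigma> g"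
  using sn by (simp add: seminorm_on_P0_def)
lemma sn_smult: "f \<in> P0 \<Longrightarrow> \<sigma> (smult a f) = cmod a * \<sigma> f"
  using sn by (simp add: seminorm_on_P0_def)
lemma sn_minus: "f \<in> P0 \<Longrightarrow> \<sigma> (- f) = \<sigma> f"
  using sn_smult[of f "-1"] by simp
lemma sn_diff_le: "f \<in> P0 \<Longrightarrow> g \<in> P0 \<Longrightarrow> \<sigma> (f - g) \<le> \<sigma> f + \<sigma> g"
  using sn_add[of f "-g"] sn_minus[of g] by simp
lemma sn_sym: "f \<in> P0 \<Longrightarrow> g \<in> P0 \<Longrightarrow> \<sigma> (f - g) = \<sigma> (g - f)"
  using sn_minus[of "g - f"] by simp
lemma sn_tri: "f \<in> P0 \<Longrightarrow> g \<in> P0 \<Longrightarrow> h \<in> P0 \<Longrightarrow> \<sigma> (f - g) \<le> \<sigma> (f - h) + \<sigma> (h - g)"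
  using sn_add[of "f - h" "h - g"] by simp
end

lemma ideal:
  assumes sn: "seminorm_on_P0 \<pi>" and sm: "submultiplicative_on_P0 \<pi>"
    and q: "q \<in> P0" and z: "\<pi> q = 0"
  shows "\<pi> (g * q) = 0"
proof -
  define g0 where "g0 = coeff g 0"
  have g': "g - [:g0:] \<in> P0" by (simp add: P0_def g0_def poly_0_coeff_0)
  have eq: "g * q = smult g0 q + (g - [:g0:]) * q" by (simp add: algebra_simps)
  have "\<pi> ((g - [:g0:]) * q) \<le> \<pi> (g - [:g0:]) * \<pi> q"
    using sm g' q by (simp add: submultiplicative_on_P0_def)
  hence a: "\<pi> ((g - [:g0:]) * q) \<le> 0" using z by simp
  have "\<pi> (g * q) \<le> \<pi> (smult g0 q) + \<pi> ((g - [:g0:]) * q)"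
    unfolding eq by (rule sn_add[OF sn]) (use q g' in auto)
  also have "\<dots> \<le> 0" using a sn_smult[OF sn q, of g0] z by simp
  finally show ?thesis using sn_nonneg[OF sn, of "g*q"] q by simp
qed

lemma contra:
  fixes \<phi> :: "complex poly \<Rightarrow> complex"
  assumes sn: "seminorm_on_P0 \<pi>"
    and D: "\<And>q \<epsilon>. q \<in> P0 \<Longrightarrow> \<epsilon> > 0 \<Longrightarrow> \<exists>m. \<pi> (q - [:0,1:] * [:1,1:] ^ m) < \<epsilon>"
    and bnd: "\<And>f g. f \<in> P0 \<Longrightarrow> g \<in> P0 \<Longrightarrow> cmod (\<phi> f - \<phi> g) \<le> C * \<pi> (f - g)"
    and v: "v \<noteq> 0" and phz: "\<And>t. \<phi> (smult t [:0,1:]) = t * v"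
    and orb: "\<And>m. \<phi> ([:0,1:] * [:1,1:] ^ m) = v * \<mu> ^ m"
  shows False
proof -
  define w :: complex where "w = (if cmod \<mu> \<le> 1 then 2 * cmod v else 0)"
  define q where "q = smult (w / v) [:0,1:]"
  have q: "q \<in> P0" by (simp add: q_def P0_def)
  have pq: "\<phi> q = w" unfolding q_def phz using v by simp
  define \<epsilon> where "\<epsilon> = cmod v / (\<bar>C\<bar> + 1)"
  have ep: "\<epsilon> > 0" using v by (simp add: \<epsilon>_def add_pos_nonneg)
  obtain k where k: "\<pi> (q - [:0,1:] * [:1,1:] ^ k) < \<epsilon>" using D[OF q ep] by blast
  have o: "[:0,1:] * [:1,1:] ^ k \<in> P0" by (simp add: P0_def)
  have "cmod (w - v * \<mu> ^ k) \<le> C * \<pi> (q - [:0,1:] * [:1,1:] ^ k)"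
    using bnd[OF q o] pq orb by simp
  also have "\<dots> \<le> \<bar>C\<bar> * \<pi> (q - [:0,1:] * [:1,1:] ^ k)"
    using sn_nonneg[OF sn, of "q - [:0,1:] * [:1,1:] ^ k"] q o
    by (intro mult_right_mono) auto
  also have "\<dots> \<le> \<bar>C\<bar> * \<epsilon>" using k by (intro mult_left_mono) auto
  also have "\<dots> < cmod v"
  proof -
    have "\<bar>C\<bar> * \<epsilon> = cmod v * (\<bar>C\<bar> / (\<bar>C\<bar> + 1))" by (simp add: \<epsilon>_def field_simps)
    also have "\<dots> < cmod v * 1" using v by (intro mult_strict_left_mono) auto
    finally show ?thesis by simp
  qed
  finally have lt: "cmod (w - v * \<mu> ^ k) < cmod v" .
  show False
  proof (cases "cmod \<mu> \<le> 1")
    case True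
    have "cmod (v * \<mu> ^ k) = cmod v * cmod \<mu> ^ k" by (simp add: norm_mult norm_power)
    also have "\<dots> \<le> cmod v * 1" using True by (intro mult_left_mono power_le_one) auto
    finally have a: "cmod (v * \<mu> ^ k) \<le> cmod v" by simp
    have "cmod w = 2 * cmod v" using True by (simp add: w_def)
    moreover have "cmod w \<le> cmod (w - v * \<mu> ^ k) + cmod (v * \<mu> ^ k)"
      using norm_triangle_ineq[of "w - v * \<mu> ^ k" "v * \<mu> ^ k"] by simp
    ultimately show False using a lt by linarith
  next
    case False
    have "cmod (v * \<mu> ^ k) = cmod v * cmod \<mu> ^ k" by (simp add: norm_mult norm_power)
    also have "\<dots> \<ge> cmod v * 1" using False by (intro mult_left_mono one_le_power) auto
    finally have "cmod (v * \<mu> ^ k) \<ge> cmod v" by simp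
    moreover have "w = 0" using False by (simp add: w_def)
    ultimately show False using lt by simp
  qed
qed




lemma approx:
  fixes \<pi> :: "complex poly \<Rightarrow> real"
  assumes semi: "seminorm_on_P0 \<pi>"
    and pP0: "\<And>k. p k \<in> P0"
    and dense: "\<And>\<sigma> q \<epsilon>. seminorm_on_P0 \<sigma> \<Longrightarrow> q \<in> P0 \<Longrightarrow> \<epsilon> > 0 \<Longrightarrow>
                    \<exists>k. \<sigma> (q - p k) < \<epsilon>"
    and npos: "\<And>k. n k \<ge> 1"
    and lim1: "(\<lambda>k. \<pi> (monom (c k) (n k) - p k)) \<longlonglongrightarrow> 0"
    and lim2: "(\<lambda>k. \<pi> ([:0, 1:] * [:1, 1:] ^ m k - p k)) \<longlonglongrightarrow> 0"
    and q: "q \<in> P0" and e: "e > 0"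
  shows "\<exists>k. \<pi> (q - monom (c k) (n k)) < e \<and> \<pi> (q - [:0,1:] * [:1,1:] ^ m k) < e"
proof -
  have e3: "e/3 > 0" using e by simp
  obtain K1 where K1: "\<And>k. k \<ge> K1 \<Longrightarrow> \<pi> (monom (c k) (n k) - p k) < e/3"
    using lim1[unfolded LIMSEQ_iff, rule_format, OF e3] by fastforce
  obtain K2 where K2: "\<And>k. k \<ge> K2 \<Longrightarrow> \<pi> ([:0, 1:] * [:1, 1:] ^ m k - p k) < e/3"
    using lim2[unfolded LIMSEQ_iff, rule_format, OF e3] by fastforce
  define K where "K = max K1 K2"
  define N where "N = Suc (degree q + (\<Sum>k<K. degree (p k)))"
  have degq: "degree q < N" by (simp add: N_def)
  have degp: "degree (p k) < N" if "k < K" for k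
  proof -
    have "degree (p k) \<le> (\<Sum>k<K. degree (p k))"
      using that by (intro member_le_sum) auto
    thus ?thesis by (simp add: N_def)
  qed
  have N1: "N \<ge> 1" by (simp add: N_def)
  define M where "M = \<pi> (monom 1 N)"
  have M0: "M \<ge> 0" unfolding M_def using sn_nonneg[OF semi] N1 by simp
  define \<delta> where "\<delta> = e / (3 * (M + 1))"
  have d0: "\<delta> > 0" using e M0 by (simp add: \<delta>_def)
  define q' where "q' = q + monom (complex_of_real \<delta>) N"
  have q': "q' \<in> P0" using q N1 by (simp add: q'_def)
  define \<sigma> where "\<sigma> = (\<lambda>f. \<pi> f + (e/\<delta>) * cmod (coeff f N))"
  have ssn: "seminorm_on_P0 \<sigma>"
    unfolding seminorm_on_P0_def
  proof (intro conjI ballI allI)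
    fix f assume "f \<in> P0" thus "0 \<le> \<sigma> f"
      using sn_nonneg[OF semi] e d0 by (simp add: \<sigma>_def)
  next
    fix f g assume fg: "f \<in> P0" "g \<in> P0"
    have "cmod (coeff (f + g) N) \<le> cmod (coeff f N) + cmod (coeff g N)"
      by (simp add: norm_triangle_ineq)
    hence X: "(e/\<delta>) * cmod (coeff (f + g) N) \<le> (e/\<delta>) * (cmod (coeff f N) + cmod (coeff g N))"
      using e d0 by (intro mult_left_mono) auto
    show "\<sigma> (f + g) \<le> \<sigma> f + \<sigma> g" using sn_add[OF semi fg] X
      unfolding \<sigma>_def distrib_left by linarith
  next
    fix a f assume f: "f \<in> P0"
    show "\<sigma> (smult a f) = cmod a * \<sigma> f"
      using sn_smult[OF semi f] by (simp add: \<sigma>_def norm_mult algebra_simps)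
  qed
  have e3': "e/3 > 0" using e by simp
  obtain k where k: "\<sigma> (q' - p k) < e/3" using dense[OF ssn q' e3'] by blast
  have kK: "k \<ge> K"
  proof (rule ccontr)
    assume "\<not> k \<ge> K"
    hence "k < K" by simp
    hence "coeff (p k) N = 0" using degp by (intro coeff_eq_0) auto
    moreover have "coeff q N = 0" using degq by (intro coeff_eq_0) auto
    ultimately have "coeff (q' - p k) N = complex_of_real \<delta>" by (simp add: q'_def)
    hence "(e/\<delta>) * cmod (coeff (q' - p k) N) = e" using d0 by simp
    moreover have "\<pi> (q' - p k) \<ge> 0" using sn_nonneg[OF semi] q' pP0 by simp
    ultimately have "\<sigma> (q' - p k) \<ge> e" by (simp add: \<sigma>_def)
    thus False using k e by simp
  qed
  have pq': "\<pi> (q' - p k) < e/3"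
    using k d0 e by (simp add: \<sigma>_def) (smt (verit) norm_ge_zero mult_nonneg_nonneg divide_nonneg_nonneg)
  have "\<pi> (q - q') = \<pi> (monom (complex_of_real \<delta>) N)"
    using sn_minus[OF semi, of "monom (complex_of_real \<delta>) N"] N1 by (simp add: q'_def)
  also have "\<dots> = \<delta> * M"
    using sn_smult[OF semi, of "monom 1 N" "complex_of_real \<delta>"] N1 d0
    by (simp add: smult_monom M_def)
  also have "\<dots> < e/3"
  proof -
    have "\<delta> * M = (e/3) * (M / (M + 1))" using M0 by (simp add: \<delta>_def field_simps)
    also have "\<dots> < (e/3) * 1" using M0 e by (intro mult_strict_left_mono) auto
    finally show ?thesis by simp
  qed
  finally have qq': "\<pi> (q - q') < e/3" .
  have pk: "\<pi> (q - p k) < 2*e/3"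
    using sn_tri[OF semi q pP0[of k] q'] qq' pq' by simp
  have mk: "n k \<ge> 1" by (rule npos)
  have "\<pi> (q - monom (c k) (n k)) \<le> \<pi> (q - p k) + \<pi> (p k - monom (c k) (n k))"
    using sn_tri[OF semi q P0_monom[OF mk] pP0[of k]] by simp
  also have "\<pi> (p k - monom (c k) (n k)) = \<pi> (monom (c k) (n k) - p k)"
    using sn_sym[OF semi pP0[of k] P0_monom[OF mk]] by simp
  finally have A: "\<pi> (q - monom (c k) (n k)) < e" using pk K1[of k] kK by (simp add: K_def)
  have "\<pi> (q - [:0,1:] * [:1,1:] ^ m k) \<le> \<pi> (q - p k) + \<pi> (p k - [:0,1:] * [:1,1:] ^ m k)"
    using sn_tri[OF semi q _ pP0[of k], of "[:0,1:] * [:1,1:] ^ m k"] by (simp add: P0_def)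
  also have "\<pi> (p k - [:0,1:] * [:1,1:] ^ m k) = \<pi> ([:0,1:] * [:1,1:] ^ m k - p k)"
    using sn_sym[OF semi pP0[of k], of "[:0,1:] * [:1,1:] ^ m k"] by (simp add: P0_def)
  finally have B: "\<pi> (q - [:0,1:] * [:1,1:] ^ m k) < e" using pk K2[of k] kK by (simp add: K_def)
  from A B show ?thesis by blast
qed




lemma normpart:
  fixes \<pi> :: "complex poly \<Rightarrow> real"
  assumes semi: "seminorm_on_P0 \<pi>"
    and submult: "submultiplicative_on_P0 \<pi>"
    and nonzero: "\<exists>q\<in>P0. \<pi> q \<noteq> 0"
    and D: "\<And>q \<epsilon>. q \<in> P0 \<Longrightarrow> \<epsilon> > 0 \<Longrightarrow> \<exists>m. \<pi> (q - [:0,1:] * [:1,1:] ^ m) < \<epsilon>"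
  shows "norm_on_P0 \<pi>"
proof -
  let ?Z = "[:0,1:] :: complex poly"
  have Zpos: "\<pi> ?Z > 0"
  proof (rule ccontr)
    assume "\<not> \<pi> ?Z > 0"
    hence Z0: "\<pi> ?Z = 0" using sn_nonneg[OF semi P0_Z] by simp
    have "\<pi> f = 0" if f: "f \<in> P0" for f
    proof -
      have "[:-0,1:] dvd f" using f by (simp add: P0_def poly_eq_0_iff_dvd)
      then obtain g where "f = ?Z * g" by (auto elim: dvdE)
      hence "f = g * ?Z" by (simp add: mult.commute)
      thus ?thesis using ideal[OF semi submult P0_Z Z0] by simp
    qed
    thus False using nonzero by blast
  qed
  show ?thesis unfolding norm_on_P0_def
  proof (intro conjI semi ballI impI; rule ccontr)
    fix q0 assume q0: "q0 \<in> P0" "\<pi> q0 = 0" "q0 \<noteq> 0"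
    obtain q where qS: "q \<in> P0 \<and> q \<noteq> 0 \<and> \<pi> q = 0"
      and qmin: "\<And>y. y \<in> P0 \<and> y \<noteq> 0 \<and> \<pi> y = 0 \<Longrightarrow> degree q \<le> degree y"
      using ex_has_least_nat[of "%y. y \<in> P0 \<and> y \<noteq> 0 \<and> \<pi> y = 0" q0 degree] q0 by blast
    have q: "q \<in> P0" "q \<noteq> 0" "\<pi> q = 0" using qS by auto
    have pos: "\<pi> u > 0" if "u \<in> P0" "u \<noteq> 0" "degree u < degree q" for u
      using qmin[of u] that sn_nonneg[OF semi that(1)] by force
    show False
    proof (cases "\<exists>\<xi>. \<xi> \<noteq> 0 \<and> poly q \<xi> = 0")
      case True
      then obtain \<xi> where l: "\<xi> \<noteq> 0" "poly q \<xi> = 0" by blast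
      have "[:-\<xi>,1:] dvd q" using l by (simp add: poly_eq_0_iff_dvd)
      then obtain u where qu: "q = [:-\<xi>,1:] * u" by (auto elim: dvdE)
      have u0: "u \<noteq> 0" using q qu by auto
      have uP: "u \<in> P0" using q(1) qu l by (simp add: P0_def)
      have "degree q = Suc (degree u)" unfolding qu by (subst degree_mult_eq) (use u0 in auto)
      hence upos: "\<pi> u > 0" using pos[OF uP u0] by simp
      have bound: "cmod (poly f \<xi>) \<le> \<pi> f" if f: "f \<in> P0" for f
      proof -
        have "[:-\<xi>,1:] dvd f - [:poly f \<xi>:]" by (subst poly_eq_0_iff_dvd[symmetric]) simp
        then obtain g where g: "f - [:poly f \<xi>:] = [:-\<xi>,1:] * g" by (auto elim: dvdE)
        have fe: "f = [:poly f \<xi>:] + [:-\<xi>,1:] * g" using g by (simp add: algebra_simps)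
        have eq: "smult (poly f \<xi>) u = f * u - g * q"
          by (subst (2) fe) (simp add: qu algebra_simps)
        have gq: "\<pi> (g * q) = 0" using ideal[OF semi submult q(1) q(3)] by simp
        have "cmod (poly f \<xi>) * \<pi> u = \<pi> (smult (poly f \<xi>) u)" using sn_smult[OF semi uP] by simp
        also have "\<dots> \<le> \<pi> (f * u) + \<pi> (g * q)"
          unfolding eq using q(1) uP by (intro sn_diff_le[OF semi]) auto
        also have "\<dots> \<le> \<pi> f * \<pi> u" using gq submult f uP by (simp add: submultiplicative_on_P0_def)
        finally show ?thesis using upos by simp
      qed
      show False
      proof (rule contra[OF semi D])
        fix f g :: "complex poly" assume "f \<in> P0" "g \<in> P0"
        thus "cmod (poly f \<xi> - poly g \<xi>) \<le> 1 * \<pi> (f - g)" using bound[of "f - g"] by simp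
      next
        show "\<xi> \<noteq> 0" by (rule l)
      next
        fix t show "poly (smult t ?Z) \<xi> = t * \<xi>" by simp
      next
        fix k show "poly (?Z * [:1,1:] ^ k) \<xi> = \<xi> * (1 + \<xi>) ^ k" by (simp add: poly_power)
      qed
    next
      case False
      obtain r where qr: "q = [:-0,1:] ^ order 0 q * r" and nr: "\<not> [:-0,1:] dvd r"
        using order_decomp[OF q(2)] by blast
      define a where "a = order 0 q"
      have "\<not> (\<exists>x. poly r x = 0)"
      proof
        assume "\<exists>x. poly r x = 0"
        then obtain x where x: "poly r x = 0" by blast
        show False
        proof (cases "x = 0")
          case True thus False using x nr by (simp add: poly_eq_0_iff_dvd)
        next
          case F: False
          have "poly q x = 0" using x by (subst qr) simp
          thus False using False F by blast
        qed
      qed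
      hence "constant (poly r)" using fundamental_theorem_of_algebra by blast
      hence "degree r = 0" by (simp add: constant_degree)
      then obtain cc where rc: "r = [:cc:]" by (meson degree_eq_zeroE)
      have qc: "q = smult cc (?Z ^ a)" using qr rc by (simp add: a_def mult.commute)
      have cc0: "cc \<noteq> 0" using q(2) qc by auto
      have a0: "a \<noteq> 0"
      proof
        assume "a = 0"
        hence "poly q 0 = cc" using qc by simp
        thus False using q(1) cc0 by (simp add: P0_def)
      qed
      have pZa: "\<pi> (?Z ^ a) = 0"
        using sn_smult[OF semi P0_Zpow[of a], of cc] a0 q(3) qc cc0 by simp
      show False
      proof (cases "a = 1")
        case True thus False using pZa Zpos by simp
      next
        case False
        then obtain b where ab: "a = Suc (Suc b)" using a0
          by (metis One_nat_def not0_implies_Suc)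
        have dq: "degree q = Suc (Suc b)" using qc cc0 ab by (simp add: degree_power_eq)
        have pb: "\<pi> (?Z ^ Suc b) > 0"
          by (rule pos) (auto simp: dq degree_power_eq P0_def simp del: power_Suc)
        define K where "K = (if b = 0 then 1 else \<pi> (?Z ^ b))"
        have bound: "cmod (coeff f 1) * \<pi> (?Z ^ Suc b) \<le> K * \<pi> f" if f: "f \<in> P0" for f
        proof -
          obtain a0' f' where f1: "f = pCons a0' f'" by (cases f)
          have "a0' = 0" using f f1 by (simp add: P0_def)
          obtain a1 h where f2: "f' = pCons a1 h" by (cases f')
          have c1: "coeff f 1 = a1" using f1 f2 by simp
          have eq: "f * ?Z ^ b = smult a1 (?Z ^ Suc b) + h * ?Z ^ Suc (Suc b)"
            using f1 f2 \<open>a0' = 0\<close> by (simp add: algebra_simps)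
          have hz: "\<pi> (h * ?Z ^ Suc (Suc b)) = 0"
          proof -
            have zP: "?Z ^ Suc (Suc b) \<in> P0" by (simp add: P0_def)
            show ?thesis using ideal[OF semi submult zP pZa[unfolded ab]] by simp
          qed
          have fz: "\<pi> (f * ?Z ^ b) \<le> K * \<pi> f"
          proof (cases "b = 0")
            case True thus ?thesis by (simp add: K_def)
          next
            case False
            hence "?Z ^ b \<in> P0" by simp
            thus ?thesis using submult f False
              by (simp add: K_def submultiplicative_on_P0_def mult.commute)
          qed
          have "cmod (coeff f 1) * \<pi> (?Z ^ Suc b) = \<pi> (smult a1 (?Z ^ Suc b))"
            using sn_smult[OF semi P0_Zpow[of "Suc b"]] c1 by simp
          also have "smult a1 (?Z ^ Suc b) = f * ?Z ^ b - h * ?Z ^ Suc (Suc b)" using eq by simp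
          also have "\<pi> \<dots> \<le> \<pi> (f * ?Z ^ b) + \<pi> (h * ?Z ^ Suc (Suc b))"
            using f by (intro sn_diff_le[OF semi]) (auto simp: P0_def)
          finally show ?thesis using hz fz by simp
        qed
        show False
        proof (rule contra[OF semi D])
          fix f g :: "complex poly" assume fg: "f \<in> P0" "g \<in> P0"
          have "cmod (coeff (f - g) 1) * \<pi> (?Z ^ Suc b) \<le> K * \<pi> (f - g)" using fg bound[of "f - g"] by simp
          hence "cmod (coeff (f - g) 1) \<le> K * \<pi> (f - g) / \<pi> (?Z ^ Suc b)"
            using pb by (simp add: pos_le_divide_eq)
          thus "cmod (coeff f 1 - coeff g 1) \<le> K / \<pi> (?Z ^ Suc b) * \<pi> (f - g)" by simp
        next
          show "(1::complex) \<noteq> 0" by simp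
        next
          fix t show "coeff (smult t ?Z) 1 = t * 1" by simp
        next
          fix k show "coeff (?Z * [:1,1:] ^ k) 1 = 1 * 1 ^ k"
            by (simp add: poly_0_coeff_0[symmetric] poly_power)
        qed
      qed
    qed
  qed
qed




lemma completion_part:
  fixes \<pi> :: "complex poly \<Rightarrow> real"
    and sc :: "complex \<Rightarrow> 'a::{real_normed_algebra,banach} \<Rightarrow> 'a"
  assumes nrm: "norm_on_P0 \<pi>"
    and A: "\<And>q e. q \<in> P0 \<Longrightarrow> e > 0 \<Longrightarrow>
       \<exists>k. \<pi> (q - monom (c k) (n k)) < e \<and> \<pi> (q - [:0,1:] * [:1,1:] ^ m k) < e"
    and npos: "\<And>k. n k \<ge> 1"
    and mpos: "\<And>k. m k \<ge> 1"
    and comp: "is_completion \<pi> sc j"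
  shows "infinite_dimensional sc \<and> chaotic_algebra sc \<and> chaotic_element sc (j [:0, 1:])"
proof -
  let ?Z = "[:0,1:] :: complex poly"
  have semi: "seminorm_on_P0 \<pi>" using nrm by (simp add: norm_on_P0_def)
  have C: "complex_scalar sc \<and>
     (\<forall>p\<in>P0. \<forall>q\<in>P0. j (p + q) = j p + j q) \<and>
     (\<forall>p\<in>P0. \<forall>q\<in>P0. j (p * q) = j p * j q) \<and>
     (\<forall>c. \<forall>p\<in>P0. j (smult c p) = sc c (j p)) \<and>
     (\<forall>p\<in>P0. norm (j p) = \<pi> p) \<and>
     closure (j ` P0) = UNIV" using comp unfolding is_completion_def .
  note csc = C[THEN conjunct1]
  note jadd = C[THEN conjunct2, THEN conjunct1, rule_format]
  note jmul = C[THEN conjunct2, THEN conjunct2, THEN conjunct1, rule_format]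
  note jsm = C[THEN conjunct2, THEN conjunct2, THEN conjunct2, THEN conjunct1, rule_format]
  note jn = C[THEN conjunct2, THEN conjunct2, THEN conjunct2, THEN conjunct2, THEN conjunct1, rule_format]
  note jcl = C[THEN conjunct2, THEN conjunct2, THEN conjunct2, THEN conjunct2, THEN conjunct2]
  have CS: "(\<forall>r x. sc (complex_of_real r) x = scaleR r x) \<and>
     (\<forall>a b x. sc (a + b) x = sc a x + sc b x) \<and>
     (\<forall>a x y. sc a (x + y) = sc a x + sc a y) \<and>
     (\<forall>a b x. sc a (sc b x) = sc (a * b) x) \<and>
     (\<forall>a x y. sc a (x * y) = sc a x * y) \<and>
     (\<forall>a x y. sc a (x * y) = x * sc a y) \<and>
     (\<forall>a x. norm (sc a x) = cmod a * norm x)" using csc unfolding complex_scalar_def .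
  note sc_real = CS[THEN conjunct1, rule_format]
  note sc_add = CS[THEN conjunct2, THEN conjunct1, rule_format]
  note sc_assoc = CS[THEN conjunct2, THEN conjunct2, THEN conjunct2, THEN conjunct1, rule_format]
  have jdiff: "j (f - g) = j f - j g" if "f \<in> P0" "g \<in> P0" for f g
    using jadd[of "f - g" g] that by simp
  have jdist: "dist (j f) (j g) = \<pi> (f - g)" if "f \<in> P0" "g \<in> P0" for f g
    using jdiff[OF that] jn[of "f - g"] that by (simp add: dist_norm)
  define a where "a = j ?Z"
  have pp: "j (?Z ^ Suc i) = ppow a i" for i
  proof (induction i)
    case 0 thus ?case by (simp add: ppow_def a_def)
  next
    case (Suc i)
    have "j (?Z ^ Suc (Suc i)) = j (?Z * ?Z ^ Suc i)" by (simp only: power_Suc)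
    also have "\<dots> = a * j (?Z ^ Suc i)" unfolding a_def
      by (rule jmul) (simp_all add: P0_def)
    also have "\<dots> = ppow a (Suc i)" using Suc by (simp add: ppow_def)
    finally show ?case .
  qed
  have uo: "j (?Z * [:1,1:] ^ i) = uorb a i" for i
  proof (induction i)
    case 0 thus ?case by (simp add: uorb_def a_def)
  next
    case (Suc i)
    have P: "?Z * [:1,1:] ^ i \<in> P0" by (simp add: P0_def)
    have P2: "?Z * (?Z * [:1,1:] ^ i) \<in> P0" by (simp add: P0_def)
    have eq: "?Z * [:1,1:] ^ Suc i = ?Z * [:1,1:] ^ i + ?Z * (?Z * [:1,1:] ^ i)"
      by (simp add: algebra_simps)
    have e1: "j (?Z * [:1,1:] ^ Suc i) = j (?Z * [:1,1:] ^ i) + j (?Z * (?Z * [:1,1:] ^ i))"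
      unfolding eq by (rule jadd[OF P P2])
    have e2: "j (?Z * (?Z * [:1,1:] ^ i)) = a * j (?Z * [:1,1:] ^ i)"
      unfolding a_def by (rule jmul[OF P0_Z P])
    have e3: "uorb a (Suc i) = uorb a i + a * uorb a i" unfolding uorb_def by simp
    show ?case by (simp only: e1 e2 e3 Suc.IH)
  qed
  have approxj: "\<exists>q\<in>P0. dist (j q) x < e" if "e > 0" for x e
      proof -
    have "x \<in> closure (j ` P0)" unfolding jcl by (rule UNIV_I)
    hence "\<exists>y\<in>j ` P0. dist y x < e" using closure_approachable[THEN iffD1, rule_format] that by blast
    then obtain q where "q \<in> P0" "dist (j q) x < e" by blast
    thus ?thesis by blast
  qed
  have ce: "chaotic_element sc a"
    unfolding chaotic_element_def
  proof (intro conjI)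
    show "closure {sc w (ppow a k) |w k. True} = UNIV"
    proof (intro set_eqI iffI UNIV_I)
      fix x :: 'a
      show "x \<in> closure {sc w (ppow a k) |w k. True}"
        unfolding closure_approachable
      proof (intro allI impI)
        fix e :: real assume e: "e > 0"
        obtain q where q: "q \<in> P0" "dist (j q) x < e/2" using approxj[of "e/2"] e by auto
        obtain k where k: "\<pi> (q - monom (c k) (n k)) < e/2" using A[OF q(1), of "e/2"] e by auto
        define y where "y = sc (c k) (ppow a (n k - 1))"
        have nk: "n k = Suc (n k - 1)" using npos[of k] by simp
        have zz: "?Z ^ n k = ?Z ^ Suc (n k - 1)" by (rule arg_cong[OF nk])
        have yj: "y = j (monom (c k) (n k))"
        proof -
          have jz: "j (?Z ^ n k) = ppow a (n k - 1)" unfolding zz by (rule pp)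
          show ?thesis unfolding y_def monom_altdef jsm[OF P0_Zpow[OF npos[of k]]] jz ..
        qed
        have "dist y x \<le> dist y (j q) + dist (j q) x" by (rule dist_triangle)
        also have "dist y (j q) = \<pi> (q - monom (c k) (n k))"
          unfolding yj using jdist[OF q(1) P0_monom[OF npos[of k]]] by (simp add: dist_commute)
        finally have "dist y x < e" using k q by simp
        moreover have "y \<in> {sc w (ppow a k) |w k. True}" unfolding y_def by blast
        ultimately show "\<exists>y\<in>{sc w (ppow a k) |w k. True}. dist y x < e" by blast
      qed
    qed
    show "closure {uorb a k |k. k \<ge> 1} = UNIV"
    proof (intro set_eqI iffI UNIV_I)
      fix x :: 'a
      show "x \<in> closure {uorb a k |k. k \<ge> 1}"
        unfolding closure_approachable
      proof (intro allI impI)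
        fix e :: real assume e: "e > 0"
        obtain q where q: "q \<in> P0" "dist (j q) x < e/2" using approxj[of "e/2"] e by auto
        obtain k where k: "\<pi> (q - ?Z * [:1,1:] ^ m k) < e/2" using A[OF q(1), of "e/2"] e by auto
        define y where "y = uorb a (m k)"
        have P: "?Z * [:1,1:] ^ m k \<in> P0" by (simp add: P0_def)
        have "dist y x \<le> dist y (j q) + dist (j q) x" by (rule dist_triangle)
        also have "dist y (j q) = \<pi> (q - ?Z * [:1,1:] ^ m k)"
          unfolding y_def uo[symmetric] using jdist[OF q(1) P] by (simp add: dist_commute)
        finally have "dist y x < e" using k q by simp
        moreover have "y \<in> {uorb a k |k. k \<ge> 1}" unfolding y_def using mpos[of k] by blast
        ultimately show "\<exists>y\<in>{uorb a k |k. k \<ge> 1}. dist y x < e" by blast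
      qed
    qed
  qed
  have j0: "j 0 = 0"
  proof -
    have "j (0 + 0) = j 0 + j 0" by (rule jadd) auto
    thus ?thesis by simp
  qed
  have idim: "infinite_dimensional sc"
    unfolding infinite_dimensional_def
  proof
    assume "\<exists>S. finite S \<and> cspan sc S = UNIV"
    then obtain S where S: "finite S" "cspan sc S = UNIV" by blast
    define T where "T = S \<union> sc \<i> ` S"
    have fT: "finite T" using S by (simp add: T_def)
    have cT: "card T \<le> 2 * card S"
      using card_Un_le[of S "sc \<i> ` S"] card_image_le[OF S(1), of "sc \<i>"] by (simp add: T_def)
    have trm: "sc u x \<in> span T" if x: "x \<in> S" for u x
    proof -
      have ueq: "complex_of_real (Re u) + complex_of_real (Im u) * \<i> = u"
        using complex_eq[of u] by (simp add: mult.commute)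
      have "sc (complex_of_real (Re u) + complex_of_real (Im u) * \<i>) x
            = sc (complex_of_real (Re u)) x + sc (complex_of_real (Im u) * \<i>) x" by (rule sc_add)
      hence e1: "sc u x = sc (complex_of_real (Re u)) x + sc (complex_of_real (Im u) * \<i>) x"
        by (simp only: ueq)
      have e2: "sc (complex_of_real (Im u) * \<i>) x = Im u *\<^sub>R sc \<i> x"
        using sc_assoc[of "complex_of_real (Im u)" "\<i>" x] sc_real[of "Im u" "sc \<i> x"] by simp
      have "Re u *\<^sub>R x \<in> span T" using x by (intro span_scale span_base) (simp add: T_def)
      moreover have "Im u *\<^sub>R sc \<i> x \<in> span T" using x by (intro span_scale span_base) (simp add: T_def)
      ultimately show ?thesis unfolding e1 e2 sc_real by (rule span_add)
    qed
    have UT: "UNIV \<subseteq> span T"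
    proof
      fix y :: 'a
      have "y \<in> cspan sc S" using S by simp
      then obtain F u where y: "y = (\<Sum>x\<in>F. sc (u x) x)" "finite F" "F \<subseteq> S"
        unfolding cspan_def by blast
      show "y \<in> span T" unfolding y(1) using y(3) trm by (intro span_sum) blast
    qed
    define N where "N = Suc (2 * card S)"
    define J where "J = (\<lambda>i. j (monom 1 i)) ` {1..N}"
    have mP: "monom 1 i \<in> P0" if "i \<in> {1..N}" for i using that by simp
    have jinj: "inj_on (\<lambda>i. j (monom 1 i)) {1..N}"
    proof (rule inj_onI)
      fix i k assume ik: "i \<in> {1..N}" "k \<in> {1..N}" "j (monom 1 i) = j (monom (1::complex) k)"
      have "\<pi> (monom 1 i - monom 1 k) = dist (j (monom 1 i)) (j (monom 1 k))"
        using jdist[OF mP[OF ik(1)] mP[OF ik(2)]] by simp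
      hence "\<pi> (monom 1 i - monom 1 k) = 0" using ik(3) by simp
      hence "monom (1::complex) i - monom 1 k = 0"
        using nrm mP[OF ik(1)] mP[OF ik(2)] unfolding norm_on_P0_def by auto
      hence "monom (1::complex) i = monom 1 k" by simp
      thus "i = k" by (metis degree_monom_eq one_neq_zero)
    qed
    have cJ: "card J = N" unfolding J_def using card_image[OF jinj] by simp
    have indep: "independent J"
    proof
      assume "dependent J"
      moreover have "finite J" by (simp add: J_def)
      ultimately obtain u where u: "\<exists>v\<in>J. u v \<noteq> 0" "(\<Sum>v\<in>J. u v *\<^sub>R v) = 0"
        using dependent_finite by blast
      define r where "r i = u (j (monom 1 i))" for i
      have s0: "(\<Sum>i\<in>{1..N}. r i *\<^sub>R j (monom 1 i)) = 0"
        using u(2) sum.reindex[OF jinj, of "\<lambda>v. u v *\<^sub>R v"] unfolding J_def r_def by (simp add: o_def)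
      have jsum: "(\<Sum>i\<in>F. monom (complex_of_real (r i)) i) \<in> P0 \<and>
           j (\<Sum>i\<in>F. monom (complex_of_real (r i)) i) = (\<Sum>i\<in>F. r i *\<^sub>R j (monom 1 i))"
        if "finite F" "F \<subseteq> {1..N}" for F
        using that
      proof (induction F rule: finite_induct)
        case empty thus ?case using j0 by simp
      next
        case (insert i F)
        have iP: "i \<in> {1..N}" using insert by simp
        have mi: "monom (complex_of_real (r i)) i \<in> P0" using iP by simp
        have IH: "(\<Sum>i\<in>F. monom (complex_of_real (r i)) i) \<in> P0"
          "j (\<Sum>i\<in>F. monom (complex_of_real (r i)) i) = (\<Sum>i\<in>F. r i *\<^sub>R j (monom 1 i))"
          using insert by auto
        have jm: "j (monom (complex_of_real (r i)) i) = r i *\<^sub>R j (monom 1 i)"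
        proof -
          have "monom (complex_of_real (r i)) i = smult (complex_of_real (r i)) (monom 1 i)"
            by (simp add: smult_monom)
          thus ?thesis using jsm[OF mP[OF iP], of "complex_of_real (r i)"] sc_real by simp
        qed
        show ?case using insert(1,2) IH mi jm jadd[OF mi IH(1)] by simp
      qed
      define P where "P = (\<Sum>i\<in>{1..N}. monom (complex_of_real (r i)) i)"
      have PP: "P \<in> P0" "j P = 0" using jsum[of "{1..N}"] s0 unfolding P_def by auto
      have "\<pi> P = 0" using jn[OF PP(1)] PP(2) by simp
      hence P0: "P = 0" using nrm PP(1) unfolding norm_on_P0_def by auto
      have rz: "r i = 0" if "i \<in> {1..N}" for i
      proof -
        have "coeff P i = (\<Sum>k\<in>{1..N}. if k = i then complex_of_real (r k) else 0)"
          unfolding P_def coeff_sum coeff_monom by simp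
        also have "\<dots> = complex_of_real (r i)" using that by (simp add: sum.delta)
        finally show ?thesis using P0 by simp
      qed
      from u(1) obtain v where "v \<in> J" "u v \<noteq> 0" by blast
      then obtain i where "i \<in> {1..N}" "v = j (monom 1 i)" unfolding J_def by blast
      thus False using rz \<open>u v \<noteq> 0\<close> unfolding r_def by auto
    qed
    have "J \<subseteq> span T" using UT by blast
    from independent_span_bound[OF fT indep this] have "card J \<le> card T" by blast
    thus False using cJ cT by (simp add: N_def)
  qed
  show ?thesis using ce idim unfolding chaotic_algebra_def a_def by blast
qed


theorem lemma3p1:
  fixes \<pi> :: "complex poly \<Rightarrow> real"
    and p :: "nat \<Rightarrow> complex poly"
    and n m :: "nat \<Rightarrow> nat"
    and c :: "nat \<Rightarrow> complex"
  assumes semi: "seminorm_on_P0 \<pi>"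
    and submult: "submultiplicative_on_P0 \<pi>"
    and nonzero: "\<exists>q\<in>P0. \<pi> q \<noteq> 0"
    and pP0: "\<And>k. p k \<in> P0"
    and dense: "\<And>\<sigma> q \<epsilon>. seminorm_on_P0 \<sigma> \<Longrightarrow> q \<in> P0 \<Longrightarrow> \<epsilon> > 0 \<Longrightarrow>
                    \<exists>k. \<sigma> (q - p k) < \<epsilon>"
    and npos: "\<And>k. n k \<ge> 1"
    and mpos: "\<And>k. m k \<ge> 1"
    and lim1: "(\<lambda>k. \<pi> (monom (c k) (n k) - p k)) \<longlonglongrightarrow> 0"
    and lim2: "(\<lambda>k. \<pi> ([:0, 1:] * [:1, 1:] ^ m k - p k)) \<longlonglongrightarrow> 0"
  shows "norm_on_P0 \<pi> \<and>
         (\<forall>(sc :: complex \<Rightarrow> 'a::{real_normed_algebra,banach} \<Rightarrow> 'a) j.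
            is_completion \<pi> sc j \<longrightarrow>
              infinite_dimensional sc \<and> chaotic_algebra sc \<and> chaotic_element sc (j [:0, 1:]))"
proof -
  have A: "\<exists>k. \<pi> (q - monom (c k) (n k)) < e \<and> \<pi> (q - [:0,1:] * [:1,1:] ^ m k) < e"
    if "q \<in> P0" "e > 0" for q e
    by (rule approx[OF semi pP0 dense npos lim1 lim2 that])
  have D: "\<exists>k. \<pi> (q - [:0,1:] * [:1,1:] ^ k) < e" if "q \<in> P0" "e > 0" for q e
    using A[OF that] by blast
  have nrm: "norm_on_P0 \<pi>" by (rule normpart[OF semi submult nonzero D])
  show ?thesis
  proof (rule conjI[OF nrm], intro allI impI)
    fix sc :: "complex \<Rightarrow> 'a::{real_normed_algebra,banach} \<Rightarrow> 'a" and j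
    assume cj: "is_completion \<pi> sc j"
    note cp = completion_part[OF nrm A npos mpos]
    show "infinite_dimensional sc \<and> chaotic_algebra sc \<and> chaotic_element sc (j [:0, 1:])"
      by (rule cp) (simp_all add: cj)
  qed
qed

end
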